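(* Let $G$ be an almost hypohamiltonian graph containing a triangle $T$. Then every vertex of $T$ has degree at least $4$ in $G$.
   Context: All graphs are finite, undirected, connected, without loops or multiple edges. A graph is hamiltonian if it has a cycle through all its vertices. A non-hamiltonian graph $G$ is almost hypohamiltonian if there exists a vertex $w$ (the exceptional vertex) such that $G - w$ is non-hamiltonian and $G - v$ is hamiltonian for every vertex $v \neq w$. *)

theory Defs
  imports Main
begin

definition simple_graph :: "'a set \<Rightarrow> ('a \<Rightarrow> 'a \<Rightarrow> bool) \<Rightarrow> bool" where
  "simple_graph V E \<longleftrightarrow> finite V \<and> (\<forall>u v. E u v \<longrightarrow> u \<in> V \<and> v \<in> V)
     \<and> (\<forall>u v. E u v \<longrightarrow> E v u) \<and> (\<forall>v. \<not> E v v)"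

definition is_path_in :: "'a set \<Rightarrow> ('a \<Rightarrow> 'a \<Rightarrow> bool) \<Rightarrow> 'a list \<Rightarrow> bool" where
  "is_path_in S E p \<longleftrightarrow> p \<noteq> [] \<and> set p \<subseteq> S \<and> (\<forall>i. Suc i < length p \<longrightarrow> E (p ! i) (p ! Suc i))"

definition connected_graph :: "'a set \<Rightarrow> ('a \<Rightarrow> 'a \<Rightarrow> bool) \<Rightarrow> bool" where
  "connected_graph V E \<longleftrightarrow> V \<noteq> {} \<and>
     (\<forall>u\<in>V. \<forall>v\<in>V. \<exists>p. is_path_in V E p \<and> hd p = u \<and> last p = v)"

definition ham_cycle :: "'a set \<Rightarrow> ('a \<Rightarrow> 'a \<Rightarrow> bool) \<Rightarrow> 'a list \<Rightarrow> bool" where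
  "ham_cycle S E c \<longleftrightarrow> distinct c \<and> set c = S \<and> length c \<ge> 3
     \<and> (\<forall>i < length c. E (c ! i) (c ! ((Suc i) mod length c)))"

definition hamiltonian :: "'a set \<Rightarrow> ('a \<Rightarrow> 'a \<Rightarrow> bool) \<Rightarrow> bool" where
  "hamiltonian S E \<longleftrightarrow> (\<exists>c. ham_cycle S E c)"

text \<open>G - v is the subgraph induced by V - {v}; ham_cycle only uses edges among
the vertices of the cycle, so hamiltonian (V - {v}) E is hamiltonicity of G - v.\<close>

definition almost_hypohamiltonian :: "'a set \<Rightarrow> ('a \<Rightarrow> 'a \<Rightarrow> bool) \<Rightarrow> bool" where
  "almost_hypohamiltonian V E \<longleftrightarrow> simple_graph V E \<and> connected_graph V E \<and>
     \<not> hamiltonian V E \<and>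
     (\<exists>w\<in>V. \<not> hamiltonian (V - {w}) E \<and> (\<forall>v\<in>V. v \<noteq> w \<longrightarrow> hamiltonian (V - {v}) E))"

definition degree :: "'a set \<Rightarrow> ('a \<Rightarrow> 'a \<Rightarrow> bool) \<Rightarrow> 'a \<Rightarrow> nat" where
  "degree V E v = card {u \<in> V. E v u}"

end

theory Submission
  imports Defs
begin

lemma cyc_iff:
  assumes "c \<noteq> []"
  shows "(\<forall>i < length c. E (c ! i) (c ! ((Suc i) mod length c)))
     \<longleftrightarrow> successively E c \<and> E (last c) (hd c)"
proof
  assume A: "\<forall>i < length c. E (c ! i) (c ! ((Suc i) mod length c))"
  have "successively E c" unfolding successively_conv_nth
  proof (intro allI impI)
    fix i assume "Suc i < length c"
    then have "E (c ! i) (c ! (Suc i mod length c))" using A Suc_lessD by blast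
    then show "E (c ! i) (c ! Suc i)" using \<open>Suc i < length c\<close> by simp
  qed
  moreover have "E (last c) (hd c)"
  proof -
    have "length c - 1 < length c" using assms by simp
    then have "E (c ! (length c - 1)) (c ! (Suc (length c - 1) mod length c))"
      using A by blast
    moreover have "Suc (length c - 1) = length c" using assms by (cases c) auto
    ultimately show ?thesis using assms by (simp add: last_conv_nth hd_conv_nth)
  qed
  ultimately show "successively E c \<and> E (last c) (hd c)" by simp
next
  assume B: "successively E c \<and> E (last c) (hd c)"
  show "\<forall>i < length c. E (c ! i) (c ! ((Suc i) mod length c))"
  proof (intro allI impI)
    fix i assume i: "i < length c"
    show "E (c ! i) (c ! ((Suc i) mod length c))"
    proof (cases "Suc i < length c")
      case True then show ?thesis using B successively_nth by (simp add: successively_nth)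
    next
      case False
      then have "Suc i = length c" using i by simp
      then show ?thesis using B assms
        by (metis diff_Suc_1 hd_conv_nth last_conv_nth mod_self)
    qed
  qed
qed

definition cyc where "cyc E c \<longleftrightarrow> successively E c \<and> E (last c) (hd c)"

lemma ham_cycle_cyc: "ham_cycle S E c \<longleftrightarrow> distinct c \<and> set c = S \<and> length c \<ge> 3 \<and> cyc E c"
proof (cases "c = []")
  case True then show ?thesis unfolding ham_cycle_def by auto
next
  case False then show ?thesis unfolding ham_cycle_def cyc_def using cyc_iff[of c E] by blast
qed

lemma rotate_head:
  assumes "cyc E c" "a \<in> set c"
  shows "\<exists>r. cyc E (a # r) \<and> set (a # r) = set c \<and> length (a # r) = length c
     \<and> (distinct c \<longrightarrow> distinct (a # r))"
proof -
  obtain xs ys where c: "c = xs @ a # ys" using assms(2) split_list by fast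
  show ?thesis
  proof (cases "xs = []")
    case True then show ?thesis using assms c by auto
  next
    case False
    have s: "successively E xs" "successively E (a # ys)" "E (last xs) a"
      using assms(1) False unfolding c cyc_def successively_append_iff by auto
    have l: "E (last (a # ys)) (hd xs)" using assms(1) False unfolding c cyc_def by simp
    have "cyc E (a # ys @ xs)"
      unfolding cyc_def using s l False
      by (auto simp: successively_append_iff[of E "a # ys" xs, simplified])
    then show ?thesis using c by (intro exI[of _ "ys @ xs"]) auto
  qed
qed

lemma key:
  assumes sg: "simple_graph V E" and nh: "\<not> hamiltonian V E"
    and hx: "hamiltonian (V - {x}) E"
    and "a \<in> V" "x \<in> V" "y \<in> V" "E a x" "E a y" "E x y"
  shows "degree V E a \<ge> 4"
proof -
  have irr: "\<And>v. \<not> E v v" and sym: "\<And>u v. E u v \<Longrightarrow> E v u" and fin: "finite V"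
    using sg unfolding simple_graph_def by auto
  have ax: "a \<noteq> x" "a \<noteq> y" "x \<noteq> y" using assms irr by auto
  obtain c where c: "ham_cycle (V - {x}) E c" using hx unfolding hamiltonian_def by auto
  have cc: "distinct c" "set c = V - {x}" "length c \<ge> 3" "cyc E c"
    using c unfolding ham_cycle_cyc by auto
  have "a \<in> set c" using cc assms ax by auto
  obtain r where r0: "cyc E (a # r)" "set (a # r) = set c" "length (a # r) = length c"
     "distinct c \<longrightarrow> distinct (a # r)"
    using rotate_head[OF cc(4) \<open>a \<in> set c\<close>] by blast
  have r: "cyc E (a # r)" "set (a # r) = V - {x}" "length (a # r) = length c" "distinct (a # r)"
    using r0 cc(1) cc(2) by simp_all
  have rne: "r \<noteq> []" and r2: "length r \<ge> 2" using r(3) cc(3) by auto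
  have hr: "E a (hd r)" using r(1) rne unfolding cyc_def by (simp add: successively_Cons)
  have lr: "E (last r) a" using r(1) rne unfolding cyc_def by simp
  have hl: "hd r \<noteq> last r"
  proof
    assume "hd r = last r"
    obtain u r' where "r = u # r'" "r' \<noteq> []" using r2 by (cases r; cases "tl r") auto
    then show False using r(4) \<open>hd r = last r\<close> by auto
  qed
  have "hd r \<in> set (a # r)" "last r \<in> set (a # r)" using rne by simp_all
  then have hin: "hd r \<in> V - {x}" "last r \<in> V - {x}" using r(2) by blast+
  have yh: "y \<noteq> hd r"
  proof
    assume yh: "y = hd r"
    have "ham_cycle V E (a # x # r)"
      unfolding ham_cycle_cyc
    proof (intro conjI)
      show "distinct (a # x # r)" using r(4) r(2) ax by auto
      show "set (a # x # r) = V" using r(2) assms by auto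
      show "3 \<le> length (a # x # r)" using r2 by simp
      show "cyc E (a # x # r)" using r(1) rne yh assms
        unfolding cyc_def by (auto simp: successively_Cons)
    qed
    then show False using nh unfolding hamiltonian_def by auto
  qed
  have yl: "y \<noteq> last r"
  proof
    assume yl: "y = last r"
    have "ham_cycle V E (a # r @ [x])"
      unfolding ham_cycle_cyc
    proof (intro conjI)
      show "distinct (a # r @ [x])" using r(4) r(2) ax by auto
      show "set (a # r @ [x]) = V" using r(2) assms by auto
      show "3 \<le> length (a # r @ [x])" using r2 by simp
      have "successively E (a # r)" using r(1) unfolding cyc_def by simp
      then show "cyc E (a # r @ [x])" using rne yl assms sym[of a x] sym[of x y]
        unfolding cyc_def by (auto simp: successively_append_iff[of E "a # r" "[x]", simplified])
    qed
    then show False using nh unfolding hamiltonian_def by auto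
  qed
  have sub: "{x, y, hd r, last r} \<subseteq> {u \<in> V. E a u}"
    using assms hin hr lr sym[OF lr] by auto
  have "card {x, y, hd r, last r} = 4"
    using ax yh yl hl hin by auto
  moreover have "card {x, y, hd r, last r} \<le> card {u \<in> V. E a u}"
    using sub fin by (intro card_mono) auto
  ultimately show ?thesis unfolding degree_def by simp
qed

theorem lemma3p5:
  fixes V :: "'a set" and E :: "'a \<Rightarrow> 'a \<Rightarrow> bool" and a b c :: 'a
  assumes "almost_hypohamiltonian V E"
    and "a \<in> V" and "b \<in> V" and "c \<in> V"
    and "E a b" and "E b c" and "E a c"
  shows "degree V E a \<ge> 4 \<and> degree V E b \<ge> 4 \<and> degree V E c \<ge> 4"
proof -
  have sg: "simple_graph V E" and nh: "\<not> hamiltonian V E"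
    using assms(1) unfolding almost_hypohamiltonian_def by auto
  obtain w where hv: "\<And>v. v \<in> V \<Longrightarrow> v \<noteq> w \<Longrightarrow> hamiltonian (V - {v}) E"
    using assms(1) unfolding almost_hypohamiltonian_def by auto
  have irr: "\<And>v. \<not> E v v" and sym: "\<And>u v. E u v \<Longrightarrow> E v u"
    using sg unfolding simple_graph_def by auto
  have tri: "degree V E p \<ge> 4" if "p \<in> V" "q \<in> V" "s \<in> V" "E p q" "E p s" "E q s" for p q s
  proof (cases "q = w")
    case False
    then show ?thesis using key[OF sg nh hv[of q]] that by auto
  next
    case True
    have "s \<noteq> q" using that irr by auto
    then show ?thesis using key[OF sg nh hv[of s], of p q] that True sym[of q s] by auto
  qed
  show ?thesis using tri[of a b c] tri[of b a c] tri[of c a b] assms sym[of a b] sym[of a c] sym[of b c] by auto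
qed

end
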